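(* Let $n,g$ be integers with $1\leq g\leq \lfloor \frac{n-3}{2}\rfloor$, and let $T$ be a tree of order $n$ of type $T_n^*$ (with respect to $g$). Then $T$ has an $R_g$-cutset and $$\kappa_g(T)=n-2g-2.$$
   Context: All graphs are finite and simple. A tree $T$ of order $n$ is of type $T_n^*$ (with respect to $g$) if it contains a vertex $v$ such that $T-v$ has two connected components with exactly $g+1$ vertices each, and every other connected component of $T-v$ (there may be none) has at most $g$ vertices. Equivalently, $T$ is obtained from two trees $T',T''$ of order $g+1$ and trees $T_1,\ldots,T_r$ ($r\ge 0$) each of order at most $g$ with $\sum_i|V(T_i)|=n-2g-3$, by adding a new vertex $v$ and one edge from $v$ to each of $T',T'',T_1,\ldots,T_r$. A set $S\subseteq V(G)$ is a cutset if $G-S$ is disconnected. For a non-negative integer $g$, a cutset $S$ is an $R_g$-cutset if every connected component of $G-S$ has at least $g+1$ vertices. If $G$ has at least one $R_g$-cutset, the $g$-extra connectivity $\kappa_g(G)$ is the minimum cardinality of an $R_g$-cutset of $G$. *)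

theory Defs
  imports Main
begin

definition graph :: "'a set \<Rightarrow> 'a set set \<Rightarrow> bool" where
  "graph V E \<longleftrightarrow> finite V \<and> (\<forall>e\<in>E. e \<subseteq> V \<and> card e = 2)"

definition reachable :: "'a set \<Rightarrow> 'a set set \<Rightarrow> 'a \<Rightarrow> 'a \<Rightarrow> bool" where
  "reachable V E u v \<longleftrightarrow> u \<in> V \<and> v \<in> V \<and>
     (\<lambda>x y. x \<in> V \<and> y \<in> V \<and> {x, y} \<in> E)\<^sup>*\<^sup>* u v"

definition connected :: "'a set \<Rightarrow> 'a set set \<Rightarrow> bool" where
  "connected V E \<longleftrightarrow> V \<noteq> {} \<and> (\<forall>u\<in>V. \<forall>v\<in>V. reachable V E u v)"

definition is_cycle :: "'a set \<Rightarrow> 'a set set \<Rightarrow> 'a list \<Rightarrow> bool" where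
  "is_cycle V E vs \<longleftrightarrow> length vs \<ge> 3 \<and> distinct vs \<and> set vs \<subseteq> V \<and>
     (\<forall>i < length vs. {vs ! i, vs ! ((i + 1) mod length vs)} \<in> E)"

definition acyclic_graph :: "'a set \<Rightarrow> 'a set set \<Rightarrow> bool" where
  "acyclic_graph V E \<longleftrightarrow> \<not> (\<exists>vs. is_cycle V E vs)"

definition tree :: "'a set \<Rightarrow> 'a set set \<Rightarrow> bool" where
  "tree V E \<longleftrightarrow> graph V E \<and> connected V E \<and> acyclic_graph V E"

definition del_verts :: "'a set \<Rightarrow> 'a set set \<Rightarrow> 'a set \<Rightarrow> 'a set \<times> 'a set set" where
  "del_verts V E S = (V - S, {e \<in> E. e \<inter> S = {}})"

definition components :: "'a set \<Rightarrow> 'a set set \<Rightarrow> 'a set set" where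
  "components V E = {C. \<exists>v\<in>V. C = {u. reachable V E v u}}"

definition cutset :: "'a set \<Rightarrow> 'a set set \<Rightarrow> 'a set \<Rightarrow> bool" where
  "cutset V E S \<longleftrightarrow> S \<subseteq> V \<and>
     (let (V', E') = del_verts V E S in \<not> connected V' E' \<and> V' \<noteq> {})"

definition Rg_cutset :: "nat \<Rightarrow> 'a set \<Rightarrow> 'a set set \<Rightarrow> 'a set \<Rightarrow> bool" where
  "Rg_cutset g V E S \<longleftrightarrow> cutset V E S \<and>
     (let (V', E') = del_verts V E S in \<forall>C\<in>components V' E'. card C \<ge> g + 1)"

definition extra_conn :: "nat \<Rightarrow> 'a set \<Rightarrow> 'a set set \<Rightarrow> nat" where
  "extra_conn g V E = (LEAST k. \<exists>S. Rg_cutset g V E S \<and> card S = k)"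

definition type_Tstar :: "nat \<Rightarrow> 'a set \<Rightarrow> 'a set set \<Rightarrow> bool" where
  "type_Tstar g V E \<longleftrightarrow> tree V E \<and> (\<exists>v\<in>V.
     (let (V', E') = del_verts V E {v} in
       \<exists>C1 C2. C1 \<in> components V' E' \<and> C2 \<in> components V' E' \<and> C1 \<noteq> C2 \<and>
         card C1 = g + 1 \<and> card C2 = g + 1 \<and>
         (\<forall>C \<in> components V' E' - {C1, C2}. card C \<le> g)))"

end

theory Submission
  imports Defs
begin

lemma reach_transfer:
  assumes r: "reachable V E u w" and uV': "u \<in> V'"
    and tr: "\<And>x y. reachable V E u x \<Longrightarrow> y \<in> V \<Longrightarrow> {x,y} \<in> E \<Longrightarrow> y \<in> V' \<and> {x,y} \<in> E'"
  shows "reachable V' E' u w"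
proof -
  have uV: "u \<in> V" using r by (simp add: reachable_def)
  from r have "(\<lambda>x y. x\<in>V \<and> y\<in>V \<and> {x,y}\<in>E)\<^sup>*\<^sup>* u w" by (simp add: reachable_def)
  then show ?thesis
  proof (induction rule: rtranclp_induct)
    case base then show ?case using uV' by (simp add: reachable_def)
  next
    case (step x y)
    have rx: "reachable V E u x" using step uV by (simp add: reachable_def)
    from tr[OF rx] step have "y\<in>V' \<and> {x,y}\<in>E'" by auto
    with step.IH show ?case unfolding reachable_def by (auto intro: rtranclp.rtrancl_into_rtrancl)
  qed
qed

lemma reach_refl: "u \<in> V \<Longrightarrow> reachable V E u u"
  by (simp add: reachable_def)

lemma reach_edge: "reachable V E u x \<Longrightarrow> y \<in> V \<Longrightarrow> {x,y} \<in> E \<Longrightarrow> reachable V E u y"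
  unfolding reachable_def by (auto intro: rtranclp.rtrancl_into_rtrancl)

lemma reach_trans: "reachable V E u x \<Longrightarrow> reachable V E x w \<Longrightarrow> reachable V E u w"
  unfolding reachable_def by (auto intro: rtranclp_trans)

lemma reach_sym: assumes "reachable V E u w" shows "reachable V E w u"
proof -
  have wV: "w \<in> V" using assms by (simp add: reachable_def)
  from assms have "(\<lambda>x y. x\<in>V \<and> y\<in>V \<and> {x,y}\<in>E)\<^sup>*\<^sup>* u w" by (simp add: reachable_def)
  then show ?thesis
  proof (induction rule: rtranclp_induct)
    case base then show ?case using assms by (simp add: reachable_def)
  next
    case (step x y)
    have e: "{y,x} \<in> E" using step by (simp add: insert_commute)
    have "reachable V E y x" unfolding reachable_def using step e
      by (auto intro: r_into_rtranclp)
    then show ?case using step.IH by (rule reach_trans)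
  qed
qed

lemma comp_eq:
  assumes "C \<in> components V E" "u \<in> C"
  shows "C = {w. reachable V E u w}"
proof -
  obtain v where "v \<in> V" and C: "C = {w. reachable V E v w}" using assms(1) by (auto simp: components_def)
  then have vu: "reachable V E v u" using assms(2) by auto
  have uv: "reachable V E u v" using vu by (rule reach_sym)
  show ?thesis
  proof (intro equalityI subsetI)
    fix w assume "w \<in> C"
    then have "reachable V E v w" using C by simp
    then show "w \<in> {w. reachable V E u w}" using reach_trans[OF uv] by simp
  next
    fix w assume "w \<in> {w. reachable V E u w}"
    then have "reachable V E u w" by simp
    then show "w \<in> C" using reach_trans[OF vu] C by simp
  qed
qed

lemma comp_sub: "C \<in> components V E \<Longrightarrow> C \<subseteq> V"
  by (auto simp: components_def reachable_def)

lemma comp_in: "u \<in> V \<Longrightarrow> {w. reachable V E u w} \<in> components V E"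
  by (auto simp: components_def)

lemma comp_disj: "C1 \<in> components V E \<Longrightarrow> C2 \<in> components V E \<Longrightarrow> C1 \<noteq> C2 \<Longrightarrow> C1 \<inter> C2 = {}"
proof (rule ccontr)
  assume h: "C1 \<in> components V E" "C2 \<in> components V E" "C1 \<noteq> C2" "C1 \<inter> C2 \<noteq> {}"
  then obtain x where "x \<in> C1" "x \<in> C2" by auto
  then have "C1 = {w. reachable V E x w}" "C2 = {w. reachable V E x w}" using comp_eq[OF h(1)] comp_eq[OF h(2)] by auto
  then show False using h by simp
qed

lemma edge_to_comp:
  assumes conn: "connected V E" and vV: "v \<in> V"
    and C: "C \<in> components (V - {v}) {e\<in>E. e \<inter> {v} = {}}"
  shows "\<exists>c\<in>C. {c,v} \<in> E"
proof -
  let ?Vv = "V - {v}" and ?Ev = "{e\<in>E. e \<inter> {v} = {}}"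
  obtain u where uC: "u \<in> C" and Cu: "C = {w. reachable ?Vv ?Ev u w}"
    using C by (auto simp: components_def reachable_def)
  have CV: "C \<subseteq> ?Vv" using comp_sub[OF C] .
  have uV: "u \<in> V" using uC CV by auto
  have "reachable V E u v" using conn uV vV by (simp add: connected_def)
  then have uv: "(\<lambda>x y. x\<in>V \<and> y\<in>V \<and> {x,y}\<in>E)\<^sup>*\<^sup>* u v" by (simp add: reachable_def)
  have "z \<in> C \<or> (\<exists>c\<in>C. {c,v} \<in> E)" if "(\<lambda>x y. x\<in>V \<and> y\<in>V \<and> {x,y}\<in>E)\<^sup>*\<^sup>* u z" for z
    using that
  proof (induction rule: rtranclp_induct)
    case base then show ?case using uC by auto
  next
    case (step x y)
    show ?case
    proof (cases "\<exists>c\<in>C. {c,v} \<in> E")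
      case True then show ?thesis by auto
    next
      case False
      with step.IH have xC: "x \<in> C" by auto
      show ?thesis
      proof (cases "y = v")
        case True then show ?thesis using xC step by auto
      next
        case False
        have xv: "x \<in> ?Vv" using xC CV by auto
        have "reachable ?Vv ?Ev u y"
          using reach_edge[of ?Vv ?Ev u x y] xC Cu step False xv by auto
        then show ?thesis using Cu by auto
      qed
    qed
  qed
  from this[OF uv] show ?thesis using CV by auto
qed

theorem lemma4p1:
  fixes V :: "'a set" and E :: "'a set set" and n g :: nat
  assumes "tree V E"
    and "card V = n"
    and "1 \<le> g"
    and "int g \<le> (int n - 3) div 2"
    and "type_Tstar g V E"
  shows "(\<exists>S. Rg_cutset g V E S) \<and> extra_conn g V E = n - 2 * g - 2"
proof -
  have finV: "finite V" and conn: "connected V E"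
    using assms(1) by (auto simp: tree_def graph_def)
  obtain v C1 C2 where vV: "v \<in> V"
    and C1: "C1 \<in> components (V - {v}) {e\<in>E. e \<inter> {v} = {}}"
    and C2: "C2 \<in> components (V - {v}) {e\<in>E. e \<inter> {v} = {}}"
    and C12: "C1 \<noteq> C2" and c1: "card C1 = g + 1" and c2: "card C2 = g + 1"
    and small: "\<forall>C \<in> components (V - {v}) {e\<in>E. e \<inter> {v} = {}} - {C1, C2}. card C \<le> g"
    using assms(5) by (auto simp: type_Tstar_def del_verts_def Let_def)
  let ?Vv = "V - {v}" and ?Ev = "{e\<in>E. e \<inter> {v} = {}}"
  have C1V: "C1 \<subseteq> ?Vv" and C2V: "C2 \<subseteq> ?Vv" using comp_sub C1 C2 by auto
  have disj: "C1 \<inter> C2 = {}" using comp_disj[OF C1 C2 C12] .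
  have finC1: "finite C1" and finC2: "finite C2" using finite_subset[OF C1V] finite_subset[OF C2V] finV by auto
  have cU: "card (C1 \<union> C2) = 2*g + 2" using card_Un_disjoint[OF finC1 finC2 disj] c1 c2 by simp
  define S0 where "S0 = V - (C1 \<union> C2)"
  have VS0: "V - S0 = C1 \<union> C2" using C1V C2V by (auto simp: S0_def)
  have vS0: "v \<in> S0" using vV C1V C2V by (auto simp: S0_def)
  let ?E0 = "{e\<in>E. e \<inter> S0 = {}}"
  have compeq: "{w. reachable (C1 \<union> C2) ?E0 u w} = C" if CC: "C \<in> {C1, C2}" and uC: "u \<in> C" for C u
  proof -
    have Ccomp: "C \<in> components ?Vv ?Ev" using CC C1 C2 by auto
    have Cu: "C = {w. reachable ?Vv ?Ev u w}" using comp_eq[OF Ccomp uC] .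
    show ?thesis
    proof (intro equalityI subsetI)
      fix w assume "w \<in> {w. reachable (C1 \<union> C2) ?E0 u w}"
      then have "reachable (C1 \<union> C2) ?E0 u w" by simp
      then have "reachable ?Vv ?Ev u w"
        by (rule reach_transfer) (use uC CC C1V C2V vS0 in \<open>auto simp: reachable_def\<close>)
      then show "w \<in> C" using Cu by auto
    next
      fix w assume "w \<in> C"
      then have "reachable ?Vv ?Ev u w" using Cu by auto
      then show "w \<in> {w. reachable (C1 \<union> C2) ?E0 u w}"
      proof -
        assume r: "reachable ?Vv ?Ev u w"
        have "reachable (C1 \<union> C2) ?E0 u w"
        proof (rule reach_transfer[OF r])
          show "u \<in> C1 \<union> C2" using uC CC by auto
        next
          fix x y assume rx: "reachable ?Vv ?Ev u x" and y: "y \<in> ?Vv" and e: "{x,y} \<in> ?Ev"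
          have "reachable ?Vv ?Ev u y" using reach_edge[OF rx y e] .
          then have "y \<in> C" "x \<in> C" using Cu rx by auto
          then show "y \<in> C1 \<union> C2 \<and> {x,y} \<in> ?E0" using CC e by (auto simp: S0_def)
        qed
        then show ?thesis by simp
      qed
    qed
  qed
  have comps0: "components (C1 \<union> C2) ?E0 = {C1, C2}"
  proof (intro equalityI subsetI)
    fix D assume "D \<in> components (C1 \<union> C2) ?E0"
    then obtain u where "u \<in> C1 \<union> C2" "D = {w. reachable (C1 \<union> C2) ?E0 u w}"
      by (auto simp: components_def)
    then show "D \<in> {C1, C2}" using compeq by blast
  next
    fix D assume D: "D \<in> {C1, C2}"
    then have "D \<noteq> {}" using c1 c2 by auto
    then obtain u where "u \<in> D" by auto
    then show "D \<in> components (C1 \<union> C2) ?E0" using compeq[OF D] D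
      by (auto simp: components_def)
  qed
  have ne1: "C1 \<noteq> {}" and ne2: "C2 \<noteq> {}" using c1 c2 by auto
  then obtain a b where a: "a \<in> C1" and b: "b \<in> C2" by auto
  have nc: "\<not> connected (C1 \<union> C2) ?E0"
  proof
    assume "connected (C1 \<union> C2) ?E0"
    then have "reachable (C1 \<union> C2) ?E0 a b" using a b by (auto simp: connected_def)
    then have "b \<in> C1" using compeq[of C1 a] a by auto
    then show False using b disj by auto
  qed
  have RS0: "Rg_cutset g V E S0"
    unfolding Rg_cutset_def cutset_def del_verts_def Let_def
    using VS0 comps0 nc c1 c2 ne1 by (auto simp: S0_def)
  have cS0: "card S0 = n - 2*g - 2"
    using card_Diff_subset[of "C1 \<union> C2" V] C1V C2V finV cU assms(2)
    by (auto simp: S0_def finite_subset)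
  have lower: "card S \<ge> n - 2*g - 2" if RS: "Rg_cutset g V E S" for S
  proof -
    let ?ES = "{e\<in>E. e \<inter> S = {}}"
    have SV: "S \<subseteq> V" and ncS: "\<not> connected (V - S) ?ES" and neS: "V - S \<noteq> {}"
      and big: "\<forall>C\<in>components (V - S) ?ES. card C \<ge> g + 1"
      using RS by (auto simp: Rg_cutset_def cutset_def del_verts_def Let_def)
    have keyA: "{x. reachable (V - S) ?ES w x} \<in> {C1, C2}"
      if wS: "w \<in> V - S" and nv: "\<not> reachable (V - S) ?ES w v" for w
    proof -
      define D where "D = {x. reachable (V - S) ?ES w x}"
      have Dc: "D \<in> components (V - S) ?ES" using comp_in[OF wS] by (simp add: D_def)
      have cD: "card D \<ge> g + 1" using big Dc by auto
      have wv: "w \<noteq> v" using nv reach_refl[OF wS] by auto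
      have wVv: "w \<in> ?Vv" using wS wv by auto
      define Cw where "Cw = {x. reachable ?Vv ?Ev w x}"
      have Cwc: "Cw \<in> components ?Vv ?Ev" using comp_in[OF wVv] by (simp add: Cw_def)
      have DC: "D \<subseteq> Cw"
      proof
        fix x assume "x \<in> D"
        then have rx: "reachable (V - S) ?ES w x" by (simp add: D_def)
        have "reachable ?Vv ?Ev w x"
        proof (rule reach_transfer[OF rx wVv])
          fix p q assume rp: "reachable (V - S) ?ES w p" and q: "q \<in> V - S" and e: "{p,q} \<in> ?ES"
          have rq: "reachable (V - S) ?ES w q" using reach_edge[OF rp q e] .
          have "p \<noteq> v" "q \<noteq> v" using rp rq nv by auto
          then show "q \<in> ?Vv \<and> {p,q} \<in> ?Ev" using q e by auto
        qed
        then show "x \<in> Cw" by (simp add: Cw_def)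
      qed
      have finCw: "finite Cw" using comp_sub[OF Cwc] finV finite_subset by blast
      have "Cw \<in> {C1, C2}"
      proof (rule ccontr)
        assume "Cw \<notin> {C1, C2}"
        then have "card Cw \<le> g" using small Cwc by auto
        moreover have "card D \<le> card Cw" using card_mono[OF finCw DC] .
        ultimately show False using cD by simp
      qed
      then have "card Cw = g + 1" using c1 c2 by auto
      then have "D = Cw" using card_subset_eq[OF finCw DC] cD card_mono[OF finCw DC] by simp
      then show ?thesis using \<open>Cw \<in> {C1, C2}\<close> by (simp add: D_def)
    qed
    have vS: "v \<in> S"
    proof (rule ccontr)
      assume vnS: "v \<notin> S"
      obtain a b where a: "a \<in> V - S" and b: "b \<in> V - S" and nab: "\<not> reachable (V - S) ?ES a b"
        using ncS neS by (auto simp: connected_def)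
      obtain w where w: "w \<in> V - S" and nw: "\<not> reachable (V - S) ?ES w v"
      proof (cases "reachable (V - S) ?ES a v")
        case True
        have "\<not> reachable (V - S) ?ES b v"
        proof
          assume "reachable (V - S) ?ES b v"
          then have "reachable (V - S) ?ES v b" by (rule reach_sym)
          with True have "reachable (V - S) ?ES a b" by (rule reach_trans)
          with nab show False by simp
        qed
        then show ?thesis using b that by blast
      next
        case False then show ?thesis using a that by blast
      qed
      have D: "{x. reachable (V - S) ?ES w x} \<in> {C1, C2}" using keyA[OF w nw] .
      then have Dc: "{x. reachable (V - S) ?ES w x} \<in> components ?Vv ?Ev" using C1 C2 by auto
      obtain c where c: "c \<in> {x. reachable (V - S) ?ES w x}" and e: "{c, v} \<in> E"
        using edge_to_comp[OF conn vV Dc] by auto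
      have rc: "reachable (V - S) ?ES w c" using c by simp
      have "c \<notin> S" using rc by (simp add: reachable_def)
      then have "reachable (V - S) ?ES w v" using reach_edge[OF rc, of v] vV vnS e by auto
      then show False using nw by simp
    qed
    have "V - S \<subseteq> C1 \<union> C2"
    proof
      fix w assume w: "w \<in> V - S"
      have nw: "\<not> reachable (V - S) ?ES w v" using vS by (simp add: reachable_def)
      have "w \<in> {x. reachable (V - S) ?ES w x}" using reach_refl[OF w] by simp
      then show "w \<in> C1 \<union> C2" using keyA[OF w nw] by auto
    qed
    then have "card (V - S) \<le> 2*g + 2" using card_mono[of "C1 \<union> C2"] finC1 finC2 cU by fastforce
    moreover have "card (V - S) = n - card S" using card_Diff_subset[OF finite_subset[OF SV finV] SV] assms(2) by simp
    moreover have "card S \<le> n" using card_mono[OF finV SV] assms(2) by simp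
    ultimately show ?thesis by linarith
  qed
  have "extra_conn g V E = n - 2*g - 2"
    unfolding extra_conn_def
  proof (rule Least_equality)
    show "\<exists>S. Rg_cutset g V E S \<and> card S = n - 2*g - 2" using RS0 cS0 by blast
  next
    fix k assume "\<exists>S. Rg_cutset g V E S \<and> card S = k"
    then show "n - 2*g - 2 \<le> k" using lower by blast
  qed
  then show ?thesis using RS0 by blast
qed

end
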